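(* The typical subranks of real $3\times3\times5$ tensors are exactly $2$ and $3$.
   Context: For $r \geq 0$ let $I_r := \sum_{j=1}^r e_j \otimes e_j \otimes e_j$. The subrank of $T \in \mathbb{R}^{n_1} \otimes \mathbb{R}^{n_2} \otimes \mathbb{R}^{n_3}$ is $Q(T) := \max\{ r \mid \exists\ \mathbb{R}\text{-linear } \varphi_i : \mathbb{R}^{n_i} \to \mathbb{R}^r,\ (\varphi_1 \otimes \varphi_2 \otimes \varphi_3) T = I_r\}$. An integer $r$ is a typical subrank of the format $n_1\times n_2\times n_3$ if $\{T \mid Q(T) = r\}$ contains a nonempty Euclidean-open subset of $\mathbb{R}^{n_1} \otimes \mathbb{R}^{n_2} \otimes \mathbb{R}^{n_3}$. *)

theory Defs
  imports "HOL-Analysis.Analysis"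
begin

text \<open>A real tensor of format n1 x n2 x n3 is an element T :: real^'c^'b^'a with
  CARD('a) = n1, CARD('b) = n2, CARD('c) = n3; its entries are T$i$j$k.
  This is a Euclidean space, so "open" is the Euclidean topology.
  An R-linear map R^n -> R^r is given by its r x n matrix, represented as
  a function M :: nat => 'a => real with rows indexed by a < r.\<close>

definition apply3 ::
  "(nat \<Rightarrow> 'a::finite \<Rightarrow> real) \<Rightarrow> (nat \<Rightarrow> 'b::finite \<Rightarrow> real) \<Rightarrow> (nat \<Rightarrow> 'c::finite \<Rightarrow> real)
   \<Rightarrow> real^'c^'b^'a \<Rightarrow> nat \<Rightarrow> nat \<Rightarrow> nat \<Rightarrow> real" where
  "apply3 A B C T a b c = (\<Sum>i\<in>UNIV. \<Sum>j\<in>UNIV. \<Sum>k\<in>UNIV. A a i * B b j * C c k * T$i$j$k)"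

definition unit_tensor :: "nat \<Rightarrow> nat \<Rightarrow> nat \<Rightarrow> real" where
  "unit_tensor a b c = (if a = b \<and> b = c then 1 else 0)"

definition subrank :: "real^'c::finite^'b::finite^'a::finite \<Rightarrow> nat" where
  "subrank T = Max {r. \<exists>A B C. \<forall>a<r. \<forall>b<r. \<forall>c<r.
                     apply3 A B C T a b c = unit_tensor a b c}"

definition typical_subrank :: "(real^'c::finite^'b::finite^'a::finite) itself \<Rightarrow> nat \<Rightarrow> bool" where
  "typical_subrank _ r \<longleftrightarrow>
     (\<exists>U :: (real^'c^'b^'a) set. open U \<and> U \<noteq> {} \<and> (\<forall>T\<in>U. subrank T = r))"

end

theory Submission
  imports Defs
begin

lemma robust:
  fixes F :: "'t::euclidean_space \<Rightarrow> 'p::euclidean_space \<Rightarrow> 'y::euclidean_space"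
  assumes der: "\<And>x. ((\<lambda>x. F (fst x) (snd x)) has_derivative D x) (at x)"
    and surj: "\<And>z. \<exists>dp. D (t0,p0) (0, dp) = z"
    and eq: "F t0 p0 = y0"
  shows "\<exists>U. open U \<and> t0 \<in> U \<and> (\<forall>t\<in>U. \<exists>p. F t p = y0)"
proof -
  define f where "f = (\<lambda>x::'t\<times>'p. (fst x, F (fst x) (snd x)))"
  define f' where "f' = (\<lambda>h::'t\<times>'p. (fst h, D (t0,p0) h))"
  have fd: "(f has_derivative (\<lambda>h. (fst h, D x h))) (at x)" for x
    unfolding f_def
    by (intro has_derivative_Pair has_derivative_fst[OF has_derivative_ident] der)
  have cont: "continuous_on UNIV f"
    using fd has_derivative_continuous continuous_at_imp_continuous_on by blast
  have blD: "bounded_linear (D (t0,p0))" using der has_derivative_bounded_linear by blast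
  then have linD: "linear (D (t0,p0))" using bounded_linear.linear by blast
  have lin: "linear f'" unfolding f'_def
    using linD by (auto simp: linear_iff)
  have "surj f'"
    unfolding surj_def
  proof
    fix y :: "'t \<times> 'y"
    obtain dp where dp: "D (t0,p0) (0, dp) = snd y - D (t0,p0) (fst y, 0)" using surj by blast
    have "D (t0,p0) (fst y, dp) = D (t0,p0) (fst y, 0) + D (t0,p0) (0, dp)"
      using linear_add[OF linD, of "(fst y,0)" "(0,dp)"] by simp
    then have "D (t0,p0) (fst y, dp) = snd y" using dp by simp
    then have "f' (fst y, dp) = y" unfolding f'_def by simp
    then show "\<exists>x. y = f' x" by metis
  qed
  then obtain g' where g': "linear g'" "f' \<circ> g' = id"
    using real_vector.linear_surjective_right_inverse lin by blast
  have bg: "bounded_linear g'" using g'(1) linear_conv_bounded_linear by blast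
  have "f (t0,p0) \<in> interior (f ` UNIV)"
    by (rule sussmann_open_mapping[OF open_UNIV cont _ _ bg]) (use fd g' f'_def in auto)
  then obtain e where e: "e > 0" "ball (t0,y0) e \<subseteq> range f"
    unfolding mem_interior f_def using eq by auto
  show ?thesis
  proof (intro exI[of _ "ball t0 e"] conjI ballI)
    show "open (ball t0 e)" by simp
    show "t0 \<in> ball t0 e" using e by simp
    fix t assume "t \<in> ball t0 e"
    then have "(t, y0) \<in> ball (t0,y0) e" by (simp add: dist_Pair_Pair dist_commute)
    then obtain x where "(t,y0) = f x" using e by blast
    then show "\<exists>p. F t p = y0" unfolding f_def by (metis fst_conv snd_conv)
  qed
qed

lemma vec_lambda_as_sum: "(\<chi> i. g i) = (\<Sum>i\<in>UNIV. axis i (g i) :: 'b::real_normed_vector^'i::finite)"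
  by (simp add: vec_eq_iff axis_def sum_component if_distrib cong: if_cong)

lemma bounded_linear_axis: "bounded_linear (\<lambda>v::'b::real_normed_vector. axis i v :: 'b^'i::finite)"
proof (rule bounded_linear_intro[where K=1])
  show "axis i (x + y) = axis i x + axis i y" for x y :: 'b by (simp add: vec_eq_iff axis_def)
  show "axis i (r *\<^sub>R x) = r *\<^sub>R axis i x" for r and x :: 'b by (simp add: vec_eq_iff axis_def)
  show "norm (axis i x) \<le> norm x * 1" for x :: 'b
  proof -
    have e: "(norm (axis i x $ j))\<^sup>2 = (if j = i then (norm x)\<^sup>2 else 0)" for j
      by (auto simp: axis_def)
    have "(\<Sum>j\<in>UNIV. (norm (axis i x $ j))\<^sup>2) = (norm x)\<^sup>2"
      by (simp only: e sum.delta) simp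
    then show ?thesis by (simp add: norm_vec_def L2_set_def)
  qed
qed

lemma has_derivative_vec_lambda_gen:
  fixes f :: "'a::real_normed_vector \<Rightarrow> 'i::finite \<Rightarrow> 'b::real_normed_vector"
  assumes "\<And>i. ((\<lambda>x. f x i) has_derivative (\<lambda>h. f' h i)) F"
  shows "((\<lambda>x. \<chi> i. f x i) has_derivative (\<lambda>h. \<chi> i. f' h i)) F"
  unfolding vec_lambda_as_sum
  by (intro has_derivative_sum bounded_linear.has_derivative[OF bounded_linear_axis] assms)

lemma has_derivative_vec_nth_gen[derivative_intros]:
  "(f has_derivative f') F \<Longrightarrow> ((\<lambda>x. f x $ i) has_derivative (\<lambda>h. f' h $ i)) F"
  by (rule bounded_linear.has_derivative[OF bounded_linear_vec_nth])

definition Fm :: "real^'c::finite^'b::finite^'a::finite \<Rightarrow> ((real^'a^'r::finite) \<times> (real^'b^'r) \<times> (real^'c^'r)) \<Rightarrow> real^'r^'r^'r" where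
  "Fm T p = (\<chi> x y z. \<Sum>i\<in>UNIV. \<Sum>j\<in>UNIV. \<Sum>k\<in>UNIV.
      fst p $ x $ i * fst (snd p) $ y $ j * snd (snd p) $ z $ k * T $ i $ j $ k)"

definition DF :: "(real^'c::finite^'b::finite^'a::finite) \<times> ((real^'a^'r::finite) \<times> (real^'b^'r) \<times> (real^'c^'r))
   \<Rightarrow> (real^'c^'b^'a) \<times> ((real^'a^'r) \<times> (real^'b^'r) \<times> (real^'c^'r)) \<Rightarrow> real^'r^'r^'r" where
  "DF x h = (\<chi> a b c. \<Sum>i\<in>UNIV. \<Sum>j\<in>UNIV. \<Sum>k\<in>UNIV.
      fst (snd h) $ a $ i * fst (snd (snd x)) $ b $ j * snd (snd (snd x)) $ c $ k * fst x $ i $ j $ k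
    + fst (snd x) $ a $ i * fst (snd (snd h)) $ b $ j * snd (snd (snd x)) $ c $ k * fst x $ i $ j $ k
    + fst (snd x) $ a $ i * fst (snd (snd x)) $ b $ j * snd (snd (snd h)) $ c $ k * fst x $ i $ j $ k
    + fst (snd x) $ a $ i * fst (snd (snd x)) $ b $ j * snd (snd (snd x)) $ c $ k * fst h $ i $ j $ k)"

lemma Fm_deriv: "((\<lambda>x. Fm (fst x) (snd x)) has_derivative DF x) (at x)"
  unfolding Fm_def DF_def
  apply (intro has_derivative_vec_lambda_gen)
  apply (rule derivative_eq_intros | simp)+
  apply (simp add: fun_eq_iff algebra_simps)
  done


lemma UNIV3: "(UNIV::3 set) = {0,1,2}"
proof -
  have "card ({0,1,2}::3 set) = CARD(3)" by simp
  then show ?thesis using card_subset_eq[of "UNIV::3 set" "{0,1,2}"] by simp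
qed

lemma UNIV4: "(UNIV::4 set) = {0,1,2,3}"
proof -
  have "card ({0,1,2,3}::4 set) = CARD(4)" by simp
  then show ?thesis using card_subset_eq[of "UNIV::4 set" "{0,1,2,3}"] by simp
qed

lemma UNIV5: "(UNIV::5 set) = {0,1,2,3,4}"
proof -
  have "card ({0,1,2,3,4}::5 set) = CARD(5)" by simp
  then show ?thesis using card_subset_eq[of "UNIV::5 set" "{0,1,2,3,4}"] by simp
qed

lemma UNIV2: "(UNIV::2 set) = {0,1}"
proof -
  have "card ({0,1}::2 set) = CARD(2)" by simp
  then show ?thesis using card_subset_eq[of "UNIV::2 set" "{0,1}"] by simp
qed

definition Sset :: "real^'c::finite^'b::finite^'a::finite \<Rightarrow> nat set" where
  "Sset T = {r. \<exists>A B C. \<forall>a<r. \<forall>b<r. \<forall>c<r. apply3 A B C T a b c = unit_tensor a b c}"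

lemma subrank_Sset: "subrank T = Max (Sset T)"
  by (simp add: subrank_def Sset_def)

definition unitv :: "real^'r::finite^'r^'r" where
  "unitv = (\<chi> x y z. if x = y \<and> y = z then 1 else 0)"

lemma Fm_Sset:
  assumes "Fm T p = (unitv :: real^'r::finite^'r^'r)"
  shows "CARD('r) \<in> Sset T"
proof -
  obtain h :: "nat \<Rightarrow> 'r" where h: "bij_betw h {0..<CARD('r)} UNIV"
    using ex_bij_betw_nat_finite[of "UNIV::'r set"] by auto
  then have inj: "inj_on h {0..<CARD('r)}" by (rule bij_betw_imp_inj_on)
  define A where "A = (\<lambda>a i. fst p $ h a $ i)"
  define B where "B = (\<lambda>a i. fst (snd p) $ h a $ i)"
  define C where "C = (\<lambda>a i. snd (snd p) $ h a $ i)"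
  have "apply3 A B C T a b c = unit_tensor a b c"
    if "a < CARD('r)" "b < CARD('r)" "c < CARD('r)" for a b c
  proof -
    have "apply3 A B C T a b c = Fm T p $ h a $ h b $ h c"
      by (simp add: apply3_def Fm_def A_def B_def C_def)
    also have "\<dots> = unitv $ h a $ h b $ h c" using assms by simp
    also have "\<dots> = unit_tensor a b c"
      using inj that unfolding unitv_def unit_tensor_def
      by (auto dest: inj_onD)
    finally show ?thesis .
  qed
  then show ?thesis unfolding Sset_def by blast
qed

lemma apply3_alt: "apply3 A B C T a b c = (\<Sum>i\<in>UNIV. A a i * (\<Sum>j\<in>UNIV. \<Sum>k\<in>UNIV. B b j * C c k * T$i$j$k))"
  unfolding apply3_def by (simp add: sum_distrib_left algebra_simps)

lemma Sset_le3:
  fixes T :: "real^'c::finite^'b::finite^3"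
  assumes "r \<in> Sset T" shows "r \<le> 3"
proof (rule ccontr)
  assume "\<not> r \<le> 3"
  then have r4: "4 \<le> r" by simp
  from assms obtain A B C where H: "\<forall>a<r. \<forall>b<r. \<forall>c<r. apply3 A B C T a b c = unit_tensor a b c"
    unfolding Sset_def by blast
  define h :: "4 \<Rightarrow> nat" where "h x = (if x = 0 then 0 else if x = 1 then 1 else if x = 2 then 2 else 3)" for x
  have hlt: "h x < 4" for x by (simp add: h_def)
  have heq: "h x = h y \<longleftrightarrow> x = y" for x y
  proof -
    have "x \<in> {0,1,2,3}" "y \<in> {0,1,2,3}" using UNIV4 by auto
    then show ?thesis by (auto simp: h_def)
  qed
  define G where "G i a = (\<Sum>j\<in>UNIV. \<Sum>k\<in>UNIV. B a j * C a k * T$i$j$k)" for i a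
  define P :: "real^3^4" where "P = (\<chi> x i. A (h x) i)"
  define Q :: "real^4^3" where "Q = (\<chi> i y. G i (h y))"
  have "P ** Q = mat 1"
  proof -
    have "(P ** Q) $ x $ y = (if x = y then 1 else 0)" for x y
    proof -
      have "(P ** Q) $ x $ y = apply3 A B C T (h x) (h y) (h y)"
        by (simp add: matrix_matrix_mult_def P_def Q_def G_def apply3_alt)
      also have "\<dots> = unit_tensor (h x) (h y) (h y)" using H hlt r4
        by (meson less_le_trans)
      also have "\<dots> = (if x = y then 1 else 0)" by (simp add: unit_tensor_def heq)
      finally show ?thesis .
    qed
    then show ?thesis by (simp add: vec_eq_iff mat_def)
  qed
  then have "rank (mat 1 :: real^4^4) \<le> rank P" using rank_mul_le_left by metis
  also have "\<dots> \<le> 3" using rank_bound[of P] by simp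
  finally show False by (simp add: rank_I)
qed




definition emb :: "3 \<Rightarrow> 5" where "emb c = (if c = 0 then 0 else if c = 1 then 1 else 2)"
definition proj :: "5 \<Rightarrow> 3" where "proj k = (if k = 0 then 0 else if k = 1 then 1 else 2)"

definition T3 :: "real^5^3^3" where
  "T3 = (\<chi> i j k. (if k = emb i \<and> i = j then 1 else 0) + (if k = 3 \<and> j = i + 1 then 1 else 0)
          + (if k = 4 \<and> i = j + 1 then 1 else 0))"

definition C3 :: "real^5^3" where "C3 = (\<chi> c k. if k = emb c then 1 else 0)"


lemma emb_simps: "emb 0 = 0" "emb 1 = 1" "emb 2 = 2" by (simp_all add: emb_def)

lemma all3: "(\<forall>x::3. P x) \<longleftrightarrow> P 0 \<and> P 1 \<and> P 2"
proof -
  have "(\<forall>x::3. P x) \<longleftrightarrow> (\<forall>x\<in>UNIV. P x)" by simp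
  also have "\<dots> \<longleftrightarrow> P 0 \<and> P 1 \<and> P 2" unfolding UNIV3 by simp
  finally show ?thesis .
qed
lemma all5: "(\<forall>x::5. P x) \<longleftrightarrow> P 0 \<and> P 1 \<and> P 2 \<and> P 3 \<and> P 4"
proof -
  have "(\<forall>x::5. P x) \<longleftrightarrow> (\<forall>x\<in>UNIV. P x)" by simp
  also have "\<dots> \<longleftrightarrow> P 0 \<and> P 1 \<and> P 2 \<and> P 3 \<and> P 4" unfolding UNIV5 by simp
  finally show ?thesis .
qed

lemma sum3: "(\<Sum>i\<in>(UNIV::3 set). f i) = f 0 + f 1 + f 2"
proof -
  have "(\<Sum>i\<in>(UNIV::3 set). f i) = sum f {0,1,2}" by (simp only: UNIV3)
  also have "\<dots> = f 0 + f 1 + f 2" by (simp add: algebra_simps)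
  finally show ?thesis .
qed
lemma sum5: "(\<Sum>i\<in>(UNIV::5 set). f i) = f 0 + f 1 + f 2 + f 3 + f 4"
proof -
  have "(\<Sum>i\<in>(UNIV::5 set). f i) = sum f {0,1,2,3,4}" by (simp only: UNIV5)
  also have "\<dots> = f 0 + f 1 + f 2 + f 3 + f 4" by (simp add: algebra_simps)
  finally show ?thesis .
qed

lemma T3_eval: "Fm T3 (mat 1, mat 1, C3) = unitv"
  unfolding Fm_def unitv_def vec_eq_iff all3
  by (simp add: sum3 sum5 T3_def C3_def mat_def emb_def)


lemma DF3_form_all:
  "\<forall>a b c. DF (T3, (mat 1, mat 1, C3)) (0, (dA, dB, dC)) $ a $ b $ c =
     dA $ a $ c * (if b = c then 1 else 0) + dB $ b $ c * (if a = c then 1 else 0)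
     + (\<Sum>k\<in>UNIV. dC $ c $ k * T3 $ a $ b $ k)"
  unfolding DF_def all3
  by (simp add: sum3 sum5 T3_def C3_def mat_def emb_def)

lemmas DF3_form = DF3_form_all[rule_format]

lemma num3: "(3::3) = 0" "(4::3) = 1" by simp_all

lemma DF3_surj: "\<exists>dp. DF (T3, (mat 1, mat 1, C3)) (0, dp) = z"
proof -
  define dC :: "real^5^3" where "dC = (\<chi> c k. if k = 3 then z$(c+1)$(c+2)$c else if k = 4 then z$(c+2)$(c+1)$c
       else if proj k = c then 0 else z$(proj k)$(proj k)$c)"
  define dA :: "real^3^3" where "dA = (\<chi> a c. if a = c then z$c$c$c else
       z$a$c$c - dC$c$3 * (if c = a + 1 then 1 else 0) - dC$c$4 * (if a = c + 1 then 1 else 0))"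
  define dB :: "real^3^3" where "dB = (\<chi> b c. if b = c then 0 else
       z$c$b$c - dC$c$3 * (if b = c + 1 then 1 else 0) - dC$c$4 * (if c = b + 1 then 1 else 0))"
  have "DF (T3, (mat 1, mat 1, C3)) (0, (dA, dB, dC)) = z"
    unfolding vec_eq_iff all3 DF3_form
    by (simp add: sum5 T3_def dA_def dB_def dC_def proj_def emb_def num3)
  then show ?thesis by blast
qed




lemma U3: "\<exists>U. open U \<and> T3 \<in> U \<and> (\<forall>t\<in>U. 3 \<in> Sset t)"
proof -
  obtain U where U: "open U" "T3 \<in> U" "\<forall>t\<in>U. \<exists>p. Fm t p = (unitv :: real^3^3^3)"
    using robust[where F=Fm and D=DF, OF Fm_deriv DF3_surj T3_eval] by blast
  have "\<forall>t\<in>U. 3 \<in> Sset t"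
  proof
    fix t assume "t \<in> U"
    then obtain p where "Fm t p = (unitv :: real^3^3^3)" using U(3) by blast
    from Fm_Sset[OF this] show "3 \<in> Sset t" by simp
  qed
  with U show ?thesis by blast
qed

definition T2 :: "real^5^3^3" where
  "T2 = (\<chi> i j k.
     if k = 0 then (if i = 0 \<and> j = 1 then 1 else if i = 1 \<and> j = 0 then -1 else 0)
     else if k = 1 then (if i = 0 \<and> j = 2 then 1 else if i = 2 \<and> j = 0 then -1 else 0)
     else if k = 2 then (if i = 1 \<and> j = 2 then 1 else if i = 2 \<and> j = 1 then 1 else 0)
     else if k = 3 then (if i = 0 \<and> j = 0 then 1 else if i = 1 \<and> j = 1 then 1 else 0)
     else (if i = 0 \<and> j = 0 then 1 else if i = 2 \<and> j = 2 then 1 else 0))"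

definition A2 :: "real^3^2" where "A2 = (\<chi> a i. if i = (if a = 0 then 0 else 1) then 1 else 0)"
definition B2 :: "real^3^2" where "B2 = (\<chi> b j. if j = (if b = 0 then 1 else 2) then 1 else 0)"
definition C2 :: "real^5^2" where "C2 = (\<chi> c k. if k = (if c = 0 then 0 else 2) then 1 else 0)"

lemma all2: "(\<forall>x::2. P x) \<longleftrightarrow> P 0 \<and> P 1"
proof -
  have "(\<forall>x::2. P x) \<longleftrightarrow> (\<forall>x\<in>UNIV. P x)" by simp
  also have "\<dots> \<longleftrightarrow> P 0 \<and> P 1" unfolding UNIV2 by simp
  finally show ?thesis .
qed

lemma T2_eval: "Fm T2 (A2, B2, C2) = unitv"
  unfolding Fm_def unitv_def vec_eq_iff all2
  by (simp add: sum3 sum5 T2_def A2_def B2_def C2_def)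

lemma DF2_surj: "\<exists>dp. DF (T2, (A2, B2, C2)) (0, dp) = z"
proof -
  define dC :: "real^5^2" where "dC = (\<chi> c k. if k = 0 then z$0$0$c else if k = 1 then z$0$1$c
       else if k = 2 then z$1$1$c else if k = 3 then z$1$0$c else 0)"
  have "DF (T2, (A2, B2, C2)) (0, (0, 0, dC)) = z"
    unfolding vec_eq_iff all2 DF_def
    by (simp add: sum3 sum5 T2_def A2_def B2_def C2_def dC_def)
  then show ?thesis by blast
qed

lemma U2a: "\<exists>U. open U \<and> T2 \<in> U \<and> (\<forall>t\<in>U. 2 \<in> Sset t)"
proof -
  obtain U where U: "open U" "T2 \<in> U" "\<forall>t\<in>U. \<exists>p. Fm t p = (unitv :: real^2^2^2)"
    using robust[where F=Fm and D=DF, OF Fm_deriv DF2_surj T2_eval] by blast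
  have "\<forall>t\<in>U. 2 \<in> Sset t"
  proof
    fix t assume "t \<in> U"
    then obtain p where "Fm t p = (unitv :: real^2^2^2)" using U(3) by blast
    from Fm_Sset[OF this] show "2 \<in> Sset t" by simp
  qed
  with U show ?thesis by blast
qed




lemma matrix_inv_props:
  fixes A :: "real^'n::finite^'n"
  assumes "invertible A"
  shows "A ** matrix_inv A = mat 1" "matrix_inv A ** A = mat 1"
  using someI_ex[OF assms[unfolded invertible_def]] unfolding matrix_inv_def by auto

lemma quat_num:
  fixes l :: "5 \<Rightarrow> real" and n r :: "3 \<Rightarrow> 3 \<Rightarrow> real"
  assumes n_def: "\<And>i j. n i j = (\<Sum>k\<in>UNIV. l k * T2$i$j$k) + r i j"
    and rb: "\<And>i j. \<bar>r i j\<bar> \<le> m/20" and lm: "\<And>k. \<bar>l k\<bar> \<le> m" and lk0: "\<bar>l k0\<bar> = m"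
    and fs: "(n 0 0 - n 1 1 - n 2 2)\<^sup>2 + (n 0 1 + n 1 0)\<^sup>2 + (n 0 2 + n 2 0)\<^sup>2 + (n 1 2 - n 2 1)\<^sup>2
             = (\<Sum>i\<in>UNIV. \<Sum>j\<in>UNIV. (n i j)\<^sup>2)"
  shows "m = 0"
proof -
  have m0: "0 \<le> m" using lm[of 0] by linarith
  have nv: "n 0 0 = l 3 + l 4 + r 0 0" "n 1 1 = l 3 + r 1 1" "n 2 2 = l 4 + r 2 2"
    "n 0 1 = l 0 + r 0 1" "n 1 0 = - l 0 + r 1 0" "n 0 2 = l 1 + r 0 2" "n 2 0 = - l 1 + r 2 0"
    "n 1 2 = l 2 + r 1 2" "n 2 1 = l 2 + r 2 1"
    by (simp_all add: n_def sum5 T2_def)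
  have a1: "\<bar>n 0 0 - n 1 1 - n 2 2\<bar> \<le> 3*m/20" unfolding abs_le_iff using rb[of 0 0, unfolded abs_le_iff] rb[of 1 1, unfolded abs_le_iff] rb[of 2 2, unfolded abs_le_iff] nv by linarith
  have a2: "\<bar>n 0 1 + n 1 0\<bar> \<le> 2*m/20" unfolding abs_le_iff using rb[of 0 1, unfolded abs_le_iff] rb[of 1 0, unfolded abs_le_iff] nv by linarith
  have a3: "\<bar>n 0 2 + n 2 0\<bar> \<le> 2*m/20" unfolding abs_le_iff using rb[of 0 2, unfolded abs_le_iff] rb[of 2 0, unfolded abs_le_iff] nv by linarith
  have a4: "\<bar>n 1 2 - n 2 1\<bar> \<le> 2*m/20" unfolding abs_le_iff using rb[of 1 2, unfolded abs_le_iff] rb[of 2 1, unfolded abs_le_iff] nv by linarith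
  have lhs: "(n 0 0 - n 1 1 - n 2 2)\<^sup>2 + (n 0 1 + n 1 0)\<^sup>2 + (n 0 2 + n 2 0)\<^sup>2 + (n 1 2 - n 2 1)\<^sup>2
      \<le> (3*m/20)\<^sup>2 + (2*m/20)\<^sup>2 + (2*m/20)\<^sup>2 + (2*m/20)\<^sup>2"
    using a1 a2 a3 a4 m0 by (intro add_mono; subst power2_le_iff_abs_le) auto
  obtain i0 j0 where ij: "\<bar>n i0 j0\<bar> \<ge> 19*m/20"
  proof -
    have "k0 \<in> {0,1,2,3,4}" using UNIV5 by auto
    then show ?thesis using that rb lk0 nv
      by (auto simp: abs_le_iff) (smt (verit))+
  qed
  have "\<bar>19*m/20\<bar> \<le> \<bar>n i0 j0\<bar>" using ij m0 by simp
  then have "(19*m/20)\<^sup>2 \<le> (n i0 j0)\<^sup>2" by (simp only: abs_le_square_iff)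
  also have "(n i0 j0)\<^sup>2 \<le> (\<Sum>j\<in>UNIV. (n i0 j)\<^sup>2)"
    by (rule member_le_sum) auto
  also have "\<dots> \<le> (\<Sum>i\<in>UNIV. \<Sum>j\<in>UNIV. (n i j)\<^sup>2)"
    by (rule member_le_sum[where f="\<lambda>i. \<Sum>j\<in>UNIV. (n i j)\<^sup>2"]) (auto intro: sum_nonneg)
  finally have "(19*m/20)\<^sup>2 \<le> (3*m/20)\<^sup>2 + (2*m/20)\<^sup>2 + (2*m/20)\<^sup>2 + (2*m/20)\<^sup>2"
    using lhs fs by linarith
  then have "m\<^sup>2 \<le> 0" by (simp add: power2_eq_square algebra_simps)
  then show "m = 0" by simp
qed


lemma no3:
  fixes T :: "real^5^3^3"
  assumes close: "\<And>i j k. \<bar>T$i$j$k - T2$i$j$k\<bar> \<le> 1/100"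
  shows "3 \<notin> Sset T"
proof
  assume "3 \<in> Sset T"
  then obtain A B C where H: "\<forall>a<3. \<forall>b<3. \<forall>c<3. apply3 A B C T a b c = unit_tensor a b c"
    unfolding Sset_def by blast
  define h :: "3 \<Rightarrow> nat" where "h x = (if x = 0 then 0 else if x = 1 then 1 else 2)" for x
  have hlt: "h x < 3" for x by (simp add: h_def)
  have heq: "h x = h y \<longleftrightarrow> x = y" for x y
  proof -
    have "x \<in> {0,1,2}" "y \<in> {0,1,2}" using UNIV3 by auto
    then show ?thesis by (auto simp: h_def)
  qed
  have h0: "h x = 0 \<longleftrightarrow> x = 0" for x by (simp add: h_def)
  define Am :: "real^3^3" where "Am = (\<chi> x i. A (h x) i)"
  define Bt :: "real^3^3" where "Bt = transpose (\<chi> y j. B (h y) j)"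
  define NW :: "(5 \<Rightarrow> real) \<Rightarrow> real^3^3" where "NW w = (\<chi> i j. \<Sum>k\<in>UNIV. w k * T$i$j$k)" for w
  have key: "(Am ** NW w ** Bt)$x$y = (\<Sum>i\<in>UNIV. \<Sum>j\<in>UNIV. \<Sum>k\<in>UNIV. A (h x) i * B (h y) j * w k * T$i$j$k)" for w x y
  proof -
    have "(Am ** NW w ** Bt)$x$y = (\<Sum>j\<in>UNIV. \<Sum>i\<in>UNIV. \<Sum>k\<in>UNIV. A (h x) i * B (h y) j * w k * T$i$j$k)"
      by (simp add: matrix_matrix_mult_def Am_def Bt_def NW_def transpose_def sum_distrib_left sum_distrib_right algebra_simps)
    also have "\<dots> = (\<Sum>i\<in>UNIV. \<Sum>j\<in>UNIV. \<Sum>k\<in>UNIV. A (h x) i * B (h y) j * w k * T$i$j$k)"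
      by (rule sum.swap)
    finally show ?thesis .
  qed
  have E: "(Am ** NW (C c) ** Bt)$x$y = (if h x = c \<and> h y = c then 1 else 0)" if "c < 3" for c x y
  proof -
    have "(Am ** NW (C c) ** Bt)$x$y = apply3 A B C T (h x) (h y) c"
      by (simp add: key apply3_def)
    also have "\<dots> = unit_tensor (h x) (h y) c" using H hlt that by blast
    finally show ?thesis by (simp add: unit_tensor_def)
  qed
  define Ns where "Ns = NW (\<lambda>k. C 0 k + C 1 k + C 2 k)"
  have AN: "Am ** Ns ** Bt = mat 1"
  proof -
    have "(Am ** Ns ** Bt)$x$y = (Am ** NW (C 0) ** Bt)$x$y + (Am ** NW (C 1) ** Bt)$x$y + (Am ** NW (C 2) ** Bt)$x$y" for x y
      unfolding Ns_def key by (simp add: algebra_simps sum.distrib)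
    then have "(Am ** Ns ** Bt)$x$y = (if x = y then 1 else 0)" for x y
      using E[of 0 x y] E[of 1 x y] E[of 2 x y] hlt[of x] hlt[of y] heq[of x y]
      by (auto simp: less_Suc_eq numeral_3_eq_3)
    then show ?thesis by (simp add: vec_eq_iff mat_def)
  qed
  have invA: "invertible Am"
    unfolding invertible_right_inverse using AN by (metis matrix_mul_assoc)
  have invB: "invertible Bt"
    unfolding invertible_left_inverse using AN by metis
  define E0 :: "real^3^3" where "E0 = (\<chi> x y. if x = 0 \<and> y = 0 then 1 else 0)"
  have N0E: "Am ** NW (C 0) ** Bt = E0"
    using E[of 0] by (simp add: vec_eq_iff E0_def h0)
  define N0 where "N0 = NW (C 0)"
  have "N0 = matrix_inv Am ** E0 ** matrix_inv Bt"
  proof -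
    have "matrix_inv Am ** E0 ** matrix_inv Bt = (matrix_inv Am ** Am) ** N0 ** (Bt ** matrix_inv Bt)"
      by (simp add: N0E[symmetric] N0_def matrix_mul_assoc)
    also have "\<dots> = N0" using invA invB by (simp add: matrix_inv_props)
    finally show ?thesis by simp
  qed
  then have N0uv: "N0$i$j = matrix_inv Am $ i $ 0 * matrix_inv Bt $ 0 $ j" for i j
    by (simp add: matrix_matrix_mult_def E0_def sum3)
  have N0nz: "N0 \<noteq> 0"
  proof
    assume "N0 = 0"
    then have "E0 = 0" using N0E by (simp add: N0_def)
    then have "E0 $ 0 $ 0 = 0" by simp
    then show False by (simp add: E0_def)
  qed
  define u where "u i = matrix_inv Am $ i $ 0" for i
  define v where "v j = matrix_inv Bt $ 0 $ j" for j
  have fs: "(N0$0$0 - N0$1$1 - N0$2$2)\<^sup>2 + (N0$0$1 + N0$1$0)\<^sup>2 + (N0$0$2 + N0$2$0)\<^sup>2 + (N0$1$2 - N0$2$1)\<^sup>2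
             = (\<Sum>i\<in>UNIV. \<Sum>j\<in>UNIV. (N0$i$j)\<^sup>2)"
    unfolding N0uv sum3 by (fold u_def v_def) algebra
  define l where "l k = C 0 k" for k
  define m where "m = Max (range (\<lambda>k. \<bar>l k\<bar>))"
  have lm: "\<bar>l k\<bar> \<le> m" for k unfolding m_def by (rule Max_ge) auto
  have "m \<in> range (\<lambda>k. \<bar>l k\<bar>)" unfolding m_def by (rule Max_in) auto
  then obtain k0 where lk0: "\<bar>l k0\<bar> = m" by auto
  define r where "r i j = (\<Sum>k\<in>UNIV. l k * (T$i$j$k - T2$i$j$k))" for i j
  have ndef: "N0$i$j = (\<Sum>k\<in>UNIV. l k * T2$i$j$k) + r i j" for i j
    by (simp add: N0_def NW_def r_def l_def algebra_simps sum.distrib sum_subtractf)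
  have rb: "\<bar>r i j\<bar> \<le> m/20" for i j
  proof -
    have "\<bar>r i j\<bar> \<le> (\<Sum>k\<in>UNIV. \<bar>l k * (T$i$j$k - T2$i$j$k)\<bar>)" unfolding r_def by (rule sum_abs)
    also have "\<dots> \<le> (\<Sum>k\<in>(UNIV::5 set). m * (1/100))"
    proof (rule sum_mono)
      fix k
      have "\<bar>l k\<bar> * \<bar>T$i$j$k - T2$i$j$k\<bar> \<le> m * (1/100)"
        using lm[of k] by (intro mult_mono[OF lm close]) auto
      then show "\<bar>l k * (T$i$j$k - T2$i$j$k)\<bar> \<le> m * (1/100)" by (simp add: abs_mult)
    qed
    also have "\<dots> = m/20" by simp
    finally show ?thesis .
  qed
  have "m = 0"
    by (rule quat_num[where n="\<lambda>i j. N0$i$j", OF ndef rb lm lk0 fs])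
  then have "l k = 0" for k using lm[of k] by simp
  then have "N0 = 0" by (simp add: N0_def NW_def l_def vec_eq_iff)
  with N0nz show False by simp
qed




lemma det_shift_poly:
  fixes M :: "real^'n::finite^'n"
  shows "\<exists>P. \<forall>t. det (M + t *\<^sub>R mat 1) = poly P t"
proof -
  define P where "P = (\<Sum>p\<in>{p. p permutes (UNIV::'n set)}. smult (of_int (sign p))
      (\<Prod>i\<in>UNIV. [: M$i$(p i), if i = p i then 1 else 0 :]))"
  have "det (M + t *\<^sub>R mat 1) = poly P t" for t
    unfolding det_def P_def poly_sum poly_smult poly_prod
    by (intro sum.cong refl arg_cong2[where f="(*)"] prod.cong) (auto simp: mat_def)
  then show ?thesis by blast
qed

lemma diag_dom_inj:
  fixes M :: "real^'n::finite^'n"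
  assumes t: "t > (\<Sum>i\<in>UNIV. \<Sum>j\<in>UNIV. \<bar>M$i$j\<bar>)"
  shows "invertible (M + t *\<^sub>R mat 1)"
proof -
  have "x = 0" if x: "(M + t *\<^sub>R mat 1) *v x = 0" for x
  proof -
    define m where "m = Max (range (\<lambda>i. \<bar>x$i\<bar>))"
    have xm: "\<bar>x$i\<bar> \<le> m" for i unfolding m_def by (rule Max_ge) auto
    have "m \<in> range (\<lambda>i. \<bar>x$i\<bar>)" unfolding m_def by (rule Max_in) auto
    then obtain i0 where i0: "\<bar>x$i0\<bar> = m" by auto
    have "(M + t *\<^sub>R mat 1) *v x = M *v x + t *\<^sub>R x"
      by (simp add: matrix_vector_mult_add_rdistrib scaleR_matrix_vector_assoc[symmetric])
    then have "(M *v x + t *\<^sub>R x) $ i0 = 0" using x by simp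
    then have row: "(\<Sum>j\<in>UNIV. M$i0$j * x$j) + t * x$i0 = 0"
      by (simp add: matrix_vector_mult_def)
    have "t * m = \<bar>\<Sum>j\<in>UNIV. M$i0$j * x$j\<bar>"
    proof -
      have "0 \<le> (\<Sum>i\<in>UNIV. \<Sum>j\<in>UNIV. \<bar>M$i$j\<bar>)" by (intro sum_nonneg) auto
      then have "t \<ge> 0" using t by linarith
      moreover have "(\<Sum>j\<in>UNIV. M$i0$j * x$j) = - (t * x$i0)" using row by linarith
      ultimately show ?thesis using i0 by (simp add: abs_mult)
    qed
    also have "\<dots> \<le> (\<Sum>j\<in>UNIV. \<bar>M$i0$j\<bar> * m)"
      by (rule order.trans[OF sum_abs sum_mono]) (simp add: abs_mult mult_left_mono xm)
    also have "\<dots> \<le> (\<Sum>i\<in>UNIV. \<Sum>j\<in>UNIV. \<bar>M$i$j\<bar>) * m"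
    proof -
      have "(\<Sum>j\<in>UNIV. \<bar>M$i0$j\<bar>) \<le> (\<Sum>i\<in>UNIV. \<Sum>j\<in>UNIV. \<bar>M$i$j\<bar>)"
        by (rule member_le_sum) (auto intro: sum_nonneg)
      moreover have "m \<ge> 0" using i0 by auto
      ultimately show ?thesis by (simp add: sum_distrib_right[symmetric] mult_right_mono)
    qed
    finally have "t * m \<le> (\<Sum>i\<in>UNIV. \<Sum>j\<in>UNIV. \<bar>M$i$j\<bar>) * m" .
    then have "(t - (\<Sum>i\<in>UNIV. \<Sum>j\<in>UNIV. \<bar>M$i$j\<bar>)) * m \<le> 0"
      by (simp add: algebra_simps)
    then have "m \<le> 0" using t by (simp add: mult_le_0_iff)
    then have "\<bar>x$i\<bar> = 0" for i using xm[of i] by simp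
    then show "x = 0" by (simp add: vec_eq_iff)
  qed
  then show ?thesis
    unfolding invertible_left_inverse matrix_left_invertible_ker by blast
qed

lemma det_shift_exists:
  fixes M :: "real^'n::finite^'n"
  assumes "d > 0"
  shows "\<exists>t. 0 < t \<and> t < d \<and> det (M + t *\<^sub>R mat 1) \<noteq> 0"
proof -
  obtain P where P: "\<And>t. det (M + t *\<^sub>R mat 1) = poly P t" using det_shift_poly by blast
  define t1 where "t1 = (\<Sum>i\<in>UNIV. \<Sum>j\<in>UNIV. \<bar>M$i$j\<bar>) + 1"
  have "det (M + t1 *\<^sub>R mat 1) \<noteq> 0"
    using diag_dom_inj[where t=t1 and M=M] invertible_det_nz unfolding t1_def by auto
  then have "P \<noteq> 0" using P by auto
  then have fin: "finite {t. poly P t = 0}" by (rule poly_roots_finite)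
  have "infinite {0<..<d}" using assms by simp
  then have "\<not> {0<..<d} \<subseteq> {t. poly P t = 0}" using fin finite_subset by blast
  then obtain t where "t \<in> {0<..<d}" "poly P t \<noteq> 0" by blast
  then show ?thesis using P by auto
qed


lemma all4: "(\<forall>x::4. P x) \<longleftrightarrow> P 0 \<and> P 1 \<and> P 2 \<and> P 3"
proof -
  have "(\<forall>x::4. P x) \<longleftrightarrow> (\<forall>x\<in>UNIV. P x)" by simp
  also have "\<dots> \<longleftrightarrow> P 0 \<and> P 1 \<and> P 2 \<and> P 3" unfolding UNIV4 by simp
  finally show ?thesis .
qed

lemma sum4: "(\<Sum>i\<in>(UNIV::4 set). f i) = f 0 + f 1 + f 2 + f 3"
proof -
  have "(\<Sum>i\<in>(UNIV::4 set). f i) = sum f {0,1,2,3}" by (simp only: UNIV4)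
  also have "\<dots> = f 0 + f 1 + f 2 + f 3" by (simp add: algebra_simps)
  finally show ?thesis .
qed

definition prow :: "4 \<Rightarrow> 3" where "prow q = (if q = 0 \<or> q = 1 then 0 else 1)"
definition pcol :: "4 \<Rightarrow> 3" where "pcol q = (if q = 0 \<or> q = 2 then 0 else 1)"
definition sl :: "4 \<Rightarrow> 5" where "sl q = (if q = 0 then 0 else if q = 1 then 1 else if q = 2 then 2 else 3)"
definition Vm :: "real^5^3^3 \<Rightarrow> real^4^4" where "Vm T = (\<chi> q q'. T $ prow q $ pcol q $ sl q')"
definition Epert :: "real^5^3^3" where
  "Epert = (\<chi> i j k. \<Sum>q\<in>UNIV. if i = prow q \<and> j = pcol q \<and> k = sl q then 1 else 0)"

lemma Vm_pert: "Vm (T + t *\<^sub>R Epert) = Vm T + t *\<^sub>R mat 1"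
  unfolding Vm_def Epert_def vec_eq_iff all4
  by (simp add: sum4 prow_def pcol_def sl_def mat_def)

lemma apply3_delta:
  assumes "\<And>a i. A a i = (if i = ra a then 1 else 0)" "\<And>b j. B b j = (if j = rb b then 1 else 0)"
  shows "apply3 A B C T a b c = (\<Sum>k\<in>UNIV. C c k * T $ ra a $ rb b $ k)"
proof -
  have "apply3 A B C T a b c = (\<Sum>i\<in>UNIV. (if i = ra a then 1 else 0) * (\<Sum>j\<in>UNIV. (if j = rb b then 1 else 0) * (\<Sum>k\<in>UNIV. C c k * T$i$j$k)))"
    unfolding apply3_def assms by (simp add: sum_distrib_left algebra_simps)
  also have "\<dots> = (\<Sum>k\<in>UNIV. C c k * T $ ra a $ rb b $ k)"
    by (simp add: if_distrib[of "\<lambda>x. x * _"] sum.delta cong: if_cong)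
  finally show ?thesis .
qed


lemma dense2:
  fixes T :: "real^5^3^3"
  assumes "e > 0"
  shows "\<exists>T'. dist T' T < e \<and> 2 \<in> Sset T'"
proof -
  have d0: "e / (norm Epert + 1) > 0" using assms by (simp add: add_nonneg_pos)
  obtain t where t: "0 < t" "t < e / (norm Epert + 1)" "det (Vm T + t *\<^sub>R mat 1) \<noteq> 0"
    using det_shift_exists[OF d0, of "Vm T"] by blast
  define T' where "T' = T + t *\<^sub>R Epert"
  have "dist T' T = t * norm Epert" unfolding T'_def using t(1) by (simp add: dist_norm)
  also have "\<dots> \<le> t * (norm Epert + 1)" using t(1) by simp
  also have "\<dots> < e" using t(2) by (simp add: pos_less_divide_eq add_nonneg_pos mult.commute)
  finally have dT: "dist T' T < e" .
  define V where "V = Vm T'"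
  have invV: "invertible V" unfolding V_def T'_def Vm_pert using t(3) invertible_det_nz by blast
  define tq :: "nat \<Rightarrow> 4" where "tq c = (if c = 0 then 0 else 3)" for c
  define mu where "mu c = matrix_inv V *v axis (tq c) (1::real)" for c
  have Vmu: "V *v mu c = axis (tq c) 1" for c
    unfolding mu_def matrix_vector_mul_assoc matrix_inv_props(1)[OF invV] by simp
  define A :: "nat \<Rightarrow> 3 \<Rightarrow> real" where "A a i = (if i = of_nat a then 1 else 0)" for a i
  define C :: "nat \<Rightarrow> 5 \<Rightarrow> real" where "C c k = (\<Sum>q\<in>UNIV. if k = sl q then mu c $ q else 0)" for c k
  define pos :: "nat \<Rightarrow> nat \<Rightarrow> 4" where
    "pos a b = (if a = 0 then (if b = 0 then 0 else 1) else (if b = 0 then 2 else 3))" for a b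
  have "apply3 A A C T' a b c = unit_tensor a b c" if ab: "a < 2" "b < 2" "c < 2" for a b c
  proof -
    have "apply3 A A C T' a b c = (\<Sum>k\<in>UNIV. C c k * T' $ of_nat a $ of_nat b $ k)"
      by (rule apply3_delta) (simp_all add: A_def)
    also have "\<dots> = (\<Sum>q\<in>UNIV. mu c $ q * T' $ of_nat a $ of_nat b $ sl q)"
      unfolding C_def sum_distrib_right
      by (subst sum.swap) (simp add: if_distrib[of "\<lambda>x. x * _"] sum.delta cong: if_cong)
    also have "\<dots> = (V *v mu c) $ pos a b"
    proof -
      have "prow (pos a b) = of_nat a" "pcol (pos a b) = of_nat b"
        using ab by (auto simp: pos_def prow_def pcol_def less_2_cases_iff)
      then show ?thesis
        by (simp add: matrix_vector_mult_def V_def Vm_def mult.commute)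
    qed
    also have "\<dots> = unit_tensor a b c"
      unfolding Vmu using ab
      by (auto simp: axis_def tq_def pos_def unit_tensor_def less_2_cases_iff)
    finally show ?thesis .
  qed
  then have "2 \<in> Sset T'" unfolding Sset_def by blast
  with dT show ?thesis by blast
qed


lemma Sset_basic:
  fixes T :: "real^5^3^3"
  shows "0 \<in> Sset T" "finite (Sset T)" "subrank T \<in> Sset T" "subrank T \<le> 3"
proof -
  show z: "0 \<in> Sset T" unfolding Sset_def by auto
  have "Sset T \<subseteq> {..3}" using Sset_le3 by blast
  then show f: "finite (Sset T)" by (rule finite_subset) simp
  show "subrank T \<in> Sset T" unfolding subrank_Sset using f z by (intro Max_in) auto
  then show "subrank T \<le> 3" using Sset_le3 by blast
qed

lemma subrank_3:
  fixes T :: "real^5^3^3"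
  assumes "3 \<in> Sset T" shows "subrank T = 3"
  unfolding subrank_Sset using assms Sset_le3 Sset_basic(2)[of T] by (intro Max_eqI) auto

lemma subrank_2:
  fixes T :: "real^5^3^3"
  assumes "2 \<in> Sset T" "3 \<notin> Sset T" shows "subrank T = 2"
proof -
  have "y \<le> 2" if "y \<in> Sset T" for y
    using Sset_le3[OF that] assms(2) that by (cases "y = 3") auto
  then show ?thesis
    unfolding subrank_Sset using assms Sset_basic(2)[of T] by (intro Max_eqI) auto
qed

lemma subrank_ge2:
  fixes T :: "real^5^3^3"
  assumes "2 \<in> Sset T" shows "subrank T \<ge> 2"
  unfolding subrank_Sset using assms Sset_basic(2)[of T] by (intro Max_ge) auto

lemma comp_le_dist:
  fixes T S :: "real^5^3^3"
  shows "\<bar>T$i$j$k - S$i$j$k\<bar> \<le> dist T S"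
proof -
  have "\<bar>T$i$j$k - S$i$j$k\<bar> = \<bar>(T - S)$i$j$k\<bar>" by simp
  also have "\<dots> \<le> norm ((T - S)$i$j)" by (rule component_le_norm_cart)
  also have "\<dots> \<le> norm ((T - S)$i)" by (rule Finite_Cartesian_Product.norm_nth_le)
  also have "\<dots> \<le> norm (T - S)" by (rule Finite_Cartesian_Product.norm_nth_le)
  finally show ?thesis by (simp add: dist_norm)
qed

theorem theorem4p10:
  shows "{r. typical_subrank TYPE(real^5^3^3) r} = {2, 3}"
proof (rule set_eqI, rule iffI)
  fix r assume "r \<in> {r. typical_subrank TYPE(real^5^3^3) r}"
  then obtain U :: "(real^5^3^3) set" where U: "open U" "U \<noteq> {}" "\<forall>T\<in>U. subrank T = r"
    unfolding typical_subrank_def by blast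
  obtain T0 where "T0 \<in> U" using U(2) by blast
  then obtain e where e: "e > 0" "ball T0 e \<subseteq> U" using U(1) open_contains_ball by blast
  obtain T' where T': "dist T' T0 < e" "2 \<in> Sset T'" using dense2[OF e(1)] by blast
  then have "T' \<in> U" using e(2) by (auto simp: dist_commute)
  then have "subrank T' = r" using U(3) by blast
  then have "2 \<le> r" "r \<le> 3" using subrank_ge2[OF T'(2)] Sset_basic(4)[of T'] by auto
  then show "r \<in> {2, 3}" by auto
next
  fix r :: nat assume "r \<in> {2, 3}"
  then consider "r = 2" | "r = 3" by blast
  then show "r \<in> {r. typical_subrank TYPE(real^5^3^3) r}"
  proof cases
    case 1
    obtain U where U: "open U" "T2 \<in> U" "\<forall>t\<in>U. 2 \<in> Sset t" using U2a by blast
    define W where "W = U \<inter> ball T2 (1/100)"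
    have "open W" "T2 \<in> W" using U by (auto simp: W_def)
    moreover have "\<forall>T\<in>W. subrank T = 2"
    proof
      fix T assume "T \<in> W"
      then have "2 \<in> Sset T" "dist T T2 < 1/100" using U by (auto simp: W_def dist_commute)
      moreover have "3 \<notin> Sset T"
        using comp_le_dist[where T=T and S=T2] \<open>dist T T2 < 1/100\<close> by (intro no3) (meson less_imp_le order.trans)
      ultimately show "subrank T = 2" using subrank_2 by blast
    qed
    ultimately show ?thesis using 1 unfolding typical_subrank_def by blast
  next
    case 2
    obtain U where U: "open U" "T3 \<in> U" "\<forall>t\<in>U. 3 \<in> Sset t" using U3 by blast
    then have "\<forall>T\<in>U. subrank T = 3" using subrank_3 by blast
    then show ?thesis using U 2 unfolding typical_subrank_def by blast
  qed
qed

end
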